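(* Let $M$ be a compact metric space and $C(M)$ the algebra of continuous functions on $M$. Let $f\star_t g=fg+\sum_{k\ge1}c_k(f,g)t^k$ be a formal deformation of $C(M)$ (an associative product on $C(M)[[t]]$, extended $t$-bilinearly) such that each coefficient $c_k$ is continuous, i.e. extends to a continuous linear map $C(M\times M)\to C(M)$. Then $\star_t$ is equivalent to the trivial deformation: there is a formal series $T=\mathrm{Id}+\sum_{k\ge1}T_kt^k$ of continuous linear maps $T_k:C(M)\to C(M)$ with $T(f)\star_t T(g)=T(fg)$ for all $f,g\in C(M)$. *)

theory Defs
  imports "HOL-Analysis.Analysis"
begin

text \<open>Pointwise product in C(M), realised as bounded continuous real functions
  (on a compact space every continuous function is bounded).\<close>
definition bc_mult :: "('a::topological_space \<Rightarrow>\<^sub>C real) \<Rightarrow> ('a \<Rightarrow>\<^sub>C real) \<Rightarrow> ('a \<Rightarrow>\<^sub>C real)"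
  where "bc_mult f g = Bcontfun (\<lambda>x. apply_bcontfun f x * apply_bcontfun g x)"

definition bc_tensor :: "('a::topological_space \<Rightarrow>\<^sub>C real) \<Rightarrow> ('a \<Rightarrow>\<^sub>C real) \<Rightarrow> (('a \<times> 'a) \<Rightarrow>\<^sub>C real)"
  where "bc_tensor f g = Bcontfun (\<lambda>p. apply_bcontfun f (fst p) * apply_bcontfun g (snd p))"

text \<open>Formal power series with coefficients in C(M) are sequences nat \<Rightarrow> C(M).
  Given the cochains c k (with c 0 = pointwise product), the t-bilinear extension
  of the star product to C(M)[[t]] is
  (F \<star> G)_n = \<Sum>_{i+j+l=n} c_i(F_j, G_l).\<close>
definition fstar ::
  "(nat \<Rightarrow> ('a::topological_space \<Rightarrow>\<^sub>C real) \<Rightarrow> ('a \<Rightarrow>\<^sub>C real) \<Rightarrow> ('a \<Rightarrow>\<^sub>C real))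
   \<Rightarrow> (nat \<Rightarrow> ('a \<Rightarrow>\<^sub>C real)) \<Rightarrow> (nat \<Rightarrow> ('a \<Rightarrow>\<^sub>C real)) \<Rightarrow> (nat \<Rightarrow> ('a \<Rightarrow>\<^sub>C real))"
  where "fstar c F G n = (\<Sum>i\<le>n. \<Sum>j\<le>n - i. c i (F j) (G (n - i - j)))"

end

theory Submission
  imports Defs
begin


lemma bc_mult_in: "(\<lambda>x. apply_bcontfun f x * apply_bcontfun g x) \<in> bcontfun"
  for f g :: "'a::topological_space \<Rightarrow>\<^sub>C real"
proof (rule bcontfun_normI)
  show "continuous_on UNIV (\<lambda>x. apply_bcontfun f x * apply_bcontfun g x)"
    by (intro continuous_intros continuous_on_apply_bcontfun)
  fix x
  have "norm (apply_bcontfun f x) \<le> norm f" "norm (apply_bcontfun g x) \<le> norm g"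
    by (rule norm_bounded)+
  then show "norm (apply_bcontfun f x * apply_bcontfun g x) \<le> norm f * norm g"
    by (simp add: abs_mult mult_mono')
qed

lemma bc_mult_apply[simp]: "apply_bcontfun (bc_mult f g) x = apply_bcontfun f x * apply_bcontfun g x"
  unfolding bc_mult_def by (simp add: Bcontfun_inverse[OF bc_mult_in])

lemma norm_bc_mult: "norm (bc_mult f g) \<le> norm f * norm g"
  by (rule norm_bound) (simp add: abs_mult mult_mono' norm_bounded[of f, simplified] norm_bounded[of g, simplified])

lemma bb_bc_mult: "bounded_bilinear (bc_mult :: ('a::topological_space \<Rightarrow>\<^sub>C real) \<Rightarrow> _)"
proof (rule bounded_bilinear.intro)
  show "\<exists>K. \<forall>a b. norm (bc_mult a b) \<le> norm a * norm b * K"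
    by (intro exI[of _ 1] allI) (simp add: norm_bc_mult)
qed (auto intro!: bcontfun_eqI simp: algebra_simps)

lemma bc_tensor_in: "(\<lambda>p. apply_bcontfun f (fst p) * apply_bcontfun g (snd p)) \<in> bcontfun"
  for f g :: "'a::topological_space \<Rightarrow>\<^sub>C real"
proof (rule bcontfun_normI)
  have cf: "continuous_on UNIV (\<lambda>p::'a\<times>'a. apply_bcontfun f (fst p))"
    by (rule continuous_on_compose2[of UNIV "apply_bcontfun f"]) (auto intro: continuous_intros)
  have cg: "continuous_on UNIV (\<lambda>p::'a\<times>'a. apply_bcontfun g (snd p))"
    by (rule continuous_on_compose2[of UNIV "apply_bcontfun g"]) (auto intro: continuous_intros)
  show "continuous_on UNIV (\<lambda>p. apply_bcontfun f (fst p) * apply_bcontfun g (snd p))"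
    using cf cg by (intro continuous_intros)
  fix p :: "'a \<times> 'a"
  have "norm (apply_bcontfun f (fst p)) \<le> norm f" "norm (apply_bcontfun g (snd p)) \<le> norm g"
    by (rule norm_bounded)+
  then show "norm (apply_bcontfun f (fst p) * apply_bcontfun g (snd p)) \<le> norm f * norm g"
    by (simp add: abs_mult mult_mono')
qed

lemma bc_tensor_apply[simp]: "apply_bcontfun (bc_tensor f g) p = apply_bcontfun f (fst p) * apply_bcontfun g (snd p)"
  unfolding bc_tensor_def by (simp add: Bcontfun_inverse[OF bc_tensor_in])

lemma norm_bc_tensor: "norm (bc_tensor f g) \<le> norm f * norm g"
  by (rule norm_bound) (simp add: abs_mult mult_mono' norm_bounded[of f, simplified] norm_bounded[of g, simplified])

lemma bb_bc_tensor: "bounded_bilinear (bc_tensor :: ('a::topological_space \<Rightarrow>\<^sub>C real) \<Rightarrow> _)"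
proof (rule bounded_bilinear.intro)
  show "\<exists>K. \<forall>a b. norm (bc_tensor a b) \<le> norm a * norm b * K"
    by (intro exI[of _ 1] allI) (simp add: norm_bc_tensor)
qed (auto intro!: bcontfun_eqI simp: algebra_simps)

lemma bb_compose: "bounded_linear L \<Longrightarrow> bounded_bilinear b \<Longrightarrow> bounded_bilinear (\<lambda>x y. L (b x y))"
proof -
  assume L: "bounded_linear L" and b: "bounded_bilinear b"
  interpret L: bounded_linear L by fact
  interpret b: bounded_bilinear b by fact
  obtain K1 where K1: "K1 > 0" "\<And>x. norm (L x) \<le> norm x * K1" using L.pos_bounded by blast
  obtain K2 where K2: "K2 > 0" "\<And>x y. norm (b x y) \<le> norm x * norm y * K2" using b.pos_bounded by blast
  show ?thesis
  proof (rule bounded_bilinear.intro)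
    show "\<exists>K. \<forall>x y. norm (L (b x y)) \<le> norm x * norm y * K"
    proof (intro exI allI)
      fix x y
      have "norm (L (b x y)) \<le> norm (b x y) * K1" by (rule K1)
      also have "\<dots> \<le> norm x * norm y * K2 * K1" using K1 K2 by (simp add: mult_right_mono)
      finally show "norm (L (b x y)) \<le> norm x * norm y * (K2 * K1)" by (simp add: ac_simps)
    qed
  qed (simp_all add: b.add_left b.add_right b.scaleR_left b.scaleR_right L.add L.scaleR)
qed

lemma bb_add: "bounded_bilinear f \<Longrightarrow> bounded_bilinear g \<Longrightarrow> bounded_bilinear (\<lambda>x y. f x y + g x y)"
proof -
  assume f: "bounded_bilinear f" and g: "bounded_bilinear g"
  interpret f: bounded_bilinear f by fact
  interpret g: bounded_bilinear g by fact
  obtain K1 where K1: "K1 > 0" "\<And>x y. norm (f x y) \<le> norm x * norm y * K1" using f.pos_bounded by blast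
  obtain K2 where K2: "K2 > 0" "\<And>x y. norm (g x y) \<le> norm x * norm y * K2" using g.pos_bounded by blast
  show ?thesis
  proof (rule bounded_bilinear.intro)
    show "\<exists>K. \<forall>x y. norm (f x y + g x y) \<le> norm x * norm y * K"
    proof (intro exI allI)
      fix x y
      have "norm (f x y + g x y) \<le> norm (f x y) + norm (g x y)" by (rule norm_triangle_ineq)
      also have "\<dots> \<le> norm x * norm y * K1 + norm x * norm y * K2" using K1 K2 by (intro add_mono) auto
      finally show "norm (f x y + g x y) \<le> norm x * norm y * (K1 + K2)" by (simp add: algebra_simps)
    qed
  qed (simp_all add: f.add_left f.add_right f.scaleR_left f.scaleR_right
         g.add_left g.add_right g.scaleR_left g.scaleR_right algebra_simps scaleR_add_right)
qed

lemma bb_zero: "bounded_bilinear (\<lambda>x y. 0)"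
  by (rule bounded_bilinear.intro) (auto intro: exI[of _ 0])

lemma bb_sum: "finite A \<Longrightarrow> (\<And>i. i \<in> A \<Longrightarrow> bounded_bilinear (f i)) \<Longrightarrow> bounded_bilinear (\<lambda>x y. \<Sum>i\<in>A. f i x y)"
  by (induction A rule: finite_induct) (auto intro: bb_add bb_zero)



definition bumpf :: "'a::metric_space \<Rightarrow> real \<Rightarrow> real \<Rightarrow> ('a \<Rightarrow>\<^sub>C real)"
  where "bumpf p s t = Bcontfun (\<lambda>y. min 1 (max 0 (s - dist y p * inverse t)))"

lemma bumpf_in: "(\<lambda>y. min 1 (max 0 (s - dist y p * inverse t))) \<in> bcontfun"
  for p :: "'a::metric_space"
proof (rule bcontfun_normI)
  show "continuous_on UNIV (\<lambda>y. min 1 (max 0 (s - dist y p * inverse t)))"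
    by (intro continuous_intros)
  fix y show "norm (min 1 (max 0 (s - dist y p * inverse t))) \<le> 1" by auto
qed

lemma bumpf_apply[simp]: "apply_bcontfun (bumpf p s t) y = min 1 (max 0 (s - dist y p / t))"
  unfolding bumpf_def by (simp add: Bcontfun_inverse[OF bumpf_in] divide_inverse)

lemma bumpf_abs: "\<bar>apply_bcontfun (bumpf p s t) y\<bar> \<le> 1" by simp

lemma norm_cut: "norm (bumpf p s t) \<le> 1"
  by (rule norm_bound) simp

lemma bumpf_center: "apply_bcontfun (bumpf p 1 t) p = 1" by simp

lemma bumpf_far: "t > 0 \<Longrightarrow> dist y p \<ge> s * t \<Longrightarrow> apply_bcontfun (bumpf p s t) y = 0"
  by (simp add: field_simps)

lemma bumpf_near2: "t > 0 \<Longrightarrow> dist y p \<le> t \<Longrightarrow> apply_bcontfun (bumpf p 2 t) y = 1"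
  by (simp add: field_simps)

lemma bc_cont_eps: "(e::real) > 0 \<Longrightarrow> \<exists>d>0. \<forall>y. dist y x < d \<longrightarrow> \<bar>apply_bcontfun g y - apply_bcontfun g x\<bar> < e"
proof -
  assume e: "e > 0"
  have "\<exists>d>0. \<forall>y. dist y x < d \<longrightarrow> dist (apply_bcontfun g y) (apply_bcontfun g x) < e"
    using continuous_on_apply_bcontfun[of UNIV g] e unfolding continuous_on_iff by blast
  then show ?thesis by (simp add: dist_real_def)
qed

lemma small_inv: "R > (0::real) \<Longrightarrow> \<exists>N. \<forall>n\<ge>N. 1 / real (Suc n) < R"
proof -
  assume "R > 0"
  then obtain N where N: "N > 0" "inverse (real N) < R" using ex_inverse_of_nat_less by blast
  have "1 / real (Suc n) < R" if "n \<ge> N" for n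
  proof -
    have "1 / real (Suc n) \<le> inverse (real N)" using N that
      by (simp add: divide_simps)
    then show ?thesis using N by linarith
  qed
  then show ?thesis by blast
qed

lemma eq_by_eps: "(\<And>e. e > 0 \<Longrightarrow> \<bar>a - b\<bar> \<le> e) \<Longrightarrow> a = (b::real)"
proof (rule ccontr)
  assume h: "\<And>e. e > 0 \<Longrightarrow> \<bar>a - b\<bar> \<le> e" and ne: "a \<noteq> b"
  then have p: "\<bar>a - b\<bar> > 0" by simp
  have "\<bar>a - b\<bar> \<le> \<bar>a - b\<bar> / 2" by (rule h) (use p in simp)
  then show False using p by (simp add: field_simps)
qed

definition Sq :: "(('a::metric_space \<Rightarrow>\<^sub>C real) \<Rightarrow> ('a \<Rightarrow>\<^sub>C real) \<Rightarrow> ('a \<Rightarrow>\<^sub>C real)) \<Rightarrow> ('a \<Rightarrow>\<^sub>C real) \<Rightarrow> 'a \<Rightarrow> nat \<Rightarrow> real"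
  where "Sq c g x n = apply_bcontfun (c (bumpf x 1 (1 / real (Suc n))) g) x"

definition Slim :: "(('a::metric_space \<Rightarrow>\<^sub>C real) \<Rightarrow> ('a \<Rightarrow>\<^sub>C real) \<Rightarrow> ('a \<Rightarrow>\<^sub>C real)) \<Rightarrow> ('a \<Rightarrow>\<^sub>C real) \<Rightarrow> 'a \<Rightarrow> real"
  where "Slim c g x = lim (Sq c g x)"

lemma bumpf_far1: "t > 0 \<Longrightarrow> t \<le> R \<Longrightarrow> dist y p \<ge> R \<Longrightarrow> apply_bcontfun (bumpf p 1 t) y = 0"
  using bumpf_far[where t=t and y=y and p=p and s=1] by simp

lemma bumpf_01: "0 \<le> apply_bcontfun (bumpf p s t) y" "apply_bcontfun (bumpf p s t) y \<le> 1"
  by simp_all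

lemma isCont_bc: "isCont (apply_bcontfun f) x"
  using continuous_on_apply_bcontfun[of UNIV f] continuous_on_eq_continuous_at[OF open_UNIV] by blast

context
  fixes c :: "('a::metric_space \<Rightarrow>\<^sub>C real) \<Rightarrow> ('a \<Rightarrow>\<^sub>C real) \<Rightarrow> ('a \<Rightarrow>\<^sub>C real)"
    and K :: real
  assumes bb: "bounded_bilinear c"
    and Kpos: "K > 0"
    and Kb: "\<And>f g. norm (c f g) \<le> norm f * norm g * K"
    and coc: "\<And>f g h x. apply_bcontfun f x * apply_bcontfun (c g h) x - apply_bcontfun (c (bc_mult f g) h) x
        + apply_bcontfun (c f (bc_mult g h)) x - apply_bcontfun (c f g) x * apply_bcontfun h x = 0"
begin

interpretation c: bounded_bilinear c by (rule bb)

lemma pt_bound: "\<bar>apply_bcontfun (c f g) x\<bar> \<le> norm f * norm g * K"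
  using norm_bounded[of "c f g" x] Kb[of f g] by simp

lemma L1:
  assumes w0: "apply_bcontfun w x = 0" and wW: "\<And>y. \<bar>apply_bcontfun w y\<bar> \<le> W"
    and wR: "\<And>y. dist y x \<ge> R \<Longrightarrow> apply_bcontfun w y = 0" and R: "R > 0"
    and ge: "\<And>y. dist y x < 2 * R \<Longrightarrow> \<bar>apply_bcontfun g y - apply_bcontfun g x\<bar> \<le> \<epsilon>"
  shows "\<bar>apply_bcontfun (c w g) x\<bar> \<le> W * \<epsilon> * K"
proof -
  define chi1 where "chi1 = bumpf x 2 R"
  have wchi1i: "bc_mult w chi1 = w"
  proof (rule bcontfun_eqI)
    fix y show "apply_bcontfun (bc_mult w chi1) y = apply_bcontfun w y"
      using wR[of y] bumpf_near2[OF R, of y x] unfolding chi1_def by (cases "dist y x \<ge> R") auto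
  qed
  have "apply_bcontfun (c w g) x = apply_bcontfun (c w (bc_mult chi1 g)) x - apply_bcontfun (c w chi1) x * apply_bcontfun g x"
    using coc[where f=w and g=chi1 and h=g and x=x] w0 wchi1i by simp
  also have "\<dots> = apply_bcontfun (c w (bc_mult chi1 g - apply_bcontfun g x *\<^sub>R chi1)) x"
    by (simp add: c.diff_right c.scaleR_right)
  finally have eq: "apply_bcontfun (c w g) x = apply_bcontfun (c w (bc_mult chi1 g - apply_bcontfun g x *\<^sub>R chi1)) x" .
  have e0: "\<epsilon> \<ge> 0" using ge[of x] R by simp
  have W0: "W \<ge> 0" using wW[of x] by simp
  have nv: "norm (bc_mult chi1 g - apply_bcontfun g x *\<^sub>R chi1) \<le> \<epsilon>"
  proof (rule norm_bound)
    fix y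
    have "apply_bcontfun (bc_mult chi1 g - apply_bcontfun g x *\<^sub>R chi1) y = apply_bcontfun chi1 y * (apply_bcontfun g y - apply_bcontfun g x)"
      by (simp add: algebra_simps)
    moreover have "\<bar>apply_bcontfun chi1 y * (apply_bcontfun g y - apply_bcontfun g x)\<bar> \<le> \<epsilon>"
    proof (cases "dist y x < 2 * R")
      case True
      have "\<bar>apply_bcontfun chi1 y\<bar> \<le> 1" unfolding chi1_def by (rule bumpf_abs)
      then have "\<bar>apply_bcontfun chi1 y\<bar> * \<bar>apply_bcontfun g y - apply_bcontfun g x\<bar> \<le> 1 * \<epsilon>"
        using ge[OF True] e0 by (intro mult_mono) auto
      then show ?thesis by (simp add: abs_mult)
    next
      case False
      then have "apply_bcontfun chi1 y = 0" unfolding chi1_def using bumpf_far[OF R, of "2" y x] by simp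
      then show ?thesis using e0 by simp
    qed
    ultimately show "norm (apply_bcontfun (bc_mult chi1 g - apply_bcontfun g x *\<^sub>R chi1) y) \<le> \<epsilon>" by simp
  qed
  have nw: "norm w \<le> W" by (rule norm_bound) (simp add: wW)
  have "\<bar>apply_bcontfun (c w g) x\<bar> \<le> norm w * norm (bc_mult chi1 g - apply_bcontfun g x *\<^sub>R chi1) * K"
    unfolding eq by (rule pt_bound)
  also have "\<dots> \<le> W * \<epsilon> * K"
    using nw nv Kpos W0 e0 by (intro mult_right_mono mult_mono) auto
  finally show ?thesis .
qed


lemma Lconv: "convergent (Sq c g x)"
proof -
  have "Cauchy (Sq c g x)"
  proof (rule metric_CauchyI)
    fix e :: real assume e: "e > 0"
    define e0 where "e0 = e / (2 * K)"
    have e0: "e0 > 0" using e Kpos by (simp add: e0_def)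
    obtain d where d: "d > 0" "\<And>y. dist y x < d \<Longrightarrow> \<bar>apply_bcontfun g y - apply_bcontfun g x\<bar> < e0"
      using bc_cont_eps[OF e0, of x g] by blast
    obtain N where N: "\<And>n. n \<ge> N \<Longrightarrow> 1 / real (Suc n) < d / 2" using small_inv[of "d/2"] d by auto
    define R where "R = 1 / real (Suc N)"
    have R: "R > 0" "2 * R < d" using N[of N] by (auto simp: R_def)
    have "\<forall>m\<ge>N. \<forall>n\<ge>N. dist (Sq c g x m) (Sq c g x n) < e"
    proof (intro allI impI)
      fix m n assume m: "m \<ge> N" and n: "n \<ge> N"
      define w where "w = bumpf x 1 (1 / real (Suc m)) - bumpf x 1 (1 / real (Suc n))"
      have tm: "1 / real (Suc m) \<le> R" using m by (simp add: R_def divide_simps)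
      have tn: "1 / real (Suc n) \<le> R" using n by (simp add: R_def divide_simps)
      have "\<bar>apply_bcontfun (c w g) x\<bar> \<le> 1 * e0 * K"
      proof (rule L1[OF _ _ _ R(1)])
        show "apply_bcontfun w x = 0" by (simp add: w_def)
        show "\<bar>apply_bcontfun w y\<bar> \<le> 1" for y
          using bumpf_01[of x 1 "1 / real (Suc m)" y] bumpf_01[of x 1 "1 / real (Suc n)" y]
          unfolding w_def minus_bcontfun.rep_eq by linarith
        show "apply_bcontfun w y = 0" if "dist y x \<ge> R" for y
          using bumpf_far1[OF _ tm that] bumpf_far1[OF _ tn that] by (simp add: w_def)
        show "\<bar>apply_bcontfun g y - apply_bcontfun g x\<bar> \<le> e0" if "dist y x < 2 * R" for y
          using d(2)[of y] that R by auto
      qed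
      also have "\<dots> < e" using e Kpos by (simp add: e0_def)
      finally have "\<bar>apply_bcontfun (c w g) x\<bar> < e" .
      moreover have "apply_bcontfun (c w g) x = Sq c g x m - Sq c g x n"
        by (simp add: w_def Sq_def c.diff_left)
      ultimately show "dist (Sq c g x m) (Sq c g x n) < e" by (simp add: dist_real_def)
    qed
    then show "\<exists>M. \<forall>m\<ge>M. \<forall>n\<ge>M. dist (Sq c g x m) (Sq c g x n) < e" by blast
  qed
  then show ?thesis by (simp add: Cauchy_convergent_iff)
qed

lemma Slim_lim: "Sq c g x \<longlonglongrightarrow> Slim c g x"
  using Lconv unfolding Slim_def convergent_LIMSEQ_iff .

lemma L2:
  assumes p1: "apply_bcontfun psi x = 1" and pP: "\<And>y. \<bar>apply_bcontfun psi y\<bar> \<le> P"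
    and pR: "\<And>y. dist y x \<ge> R \<Longrightarrow> apply_bcontfun psi y = 0" and R: "R > 0"
    and ge: "\<And>y. dist y x < 2 * R \<Longrightarrow> \<bar>apply_bcontfun g y - apply_bcontfun g x\<bar> \<le> \<epsilon>"
  shows "\<bar>Slim c g x - apply_bcontfun (c psi g) x\<bar> \<le> (1 + P) * \<epsilon> * K"
proof -
  obtain N where N: "\<And>n. n \<ge> N \<Longrightarrow> 1 / real (Suc n) < R" using small_inv[OF R] by auto
  have ev: "\<forall>\<^sub>F n in sequentially. \<bar>Sq c g x n - apply_bcontfun (c psi g) x\<bar> \<le> (1 + P) * \<epsilon> * K"
    unfolding eventually_sequentially
  proof (intro exI allI impI)
    fix n assume n: "n \<ge> N"
    define w where "w = bumpf x 1 (1 / real (Suc n)) - psi"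
    have tn: "1 / real (Suc n) \<le> R" using N[OF n] by simp
    have "\<bar>apply_bcontfun (c w g) x\<bar> \<le> (1 + P) * \<epsilon> * K"
    proof (rule L1[OF _ _ _ R])
      show "apply_bcontfun w x = 0" by (simp add: w_def p1)
      show "\<bar>apply_bcontfun w y\<bar> \<le> 1 + P" for y
        using bumpf_01[of x 1 "1 / real (Suc n)" y] pP[of y]
        unfolding w_def minus_bcontfun.rep_eq by linarith
      show "apply_bcontfun w y = 0" if "dist y x \<ge> R" for y
        using bumpf_far1[OF _ tn that] pR[OF that] by (simp add: w_def)
      show "\<bar>apply_bcontfun g y - apply_bcontfun g x\<bar> \<le> \<epsilon>" if "dist y x < 2 * R" for y
        using ge that by auto
    qed
    moreover have "apply_bcontfun (c w g) x = Sq c g x n - apply_bcontfun (c psi g) x"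
      by (simp add: w_def Sq_def c.diff_left)
    ultimately show "\<bar>Sq c g x n - apply_bcontfun (c psi g) x\<bar> \<le> (1 + P) * \<epsilon> * K" by simp
  qed
  have "(\<lambda>n. \<bar>Sq c g x n - apply_bcontfun (c psi g) x\<bar>) \<longlonglongrightarrow> \<bar>Slim c g x - apply_bcontfun (c psi g) x\<bar>"
    by (intro tendsto_intros Slim_lim)
  then show ?thesis by (rule tendsto_upperbound[OF _ ev]) simp
qed

lemma Slim_add: "Slim c (f + g) x = Slim c f x + Slim c g x"
proof -
  have "(\<lambda>n. Sq c f x n + Sq c g x n) \<longlonglongrightarrow> Slim c f x + Slim c g x"
    by (intro tendsto_intros Slim_lim)
  moreover have "(\<lambda>n. Sq c f x n + Sq c g x n) = Sq c (f + g) x"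
    by (auto simp: Sq_def c.add_right)
  ultimately have "Sq c (f + g) x \<longlonglongrightarrow> Slim c f x + Slim c g x" by simp
  from LIMSEQ_unique[OF Slim_lim this] show ?thesis .
qed

lemma Slim_scale: "Slim c (r *\<^sub>R g) x = r * Slim c g x"
proof -
  have "(\<lambda>n. r * Sq c g x n) \<longlonglongrightarrow> r * Slim c g x"
    by (intro tendsto_intros Slim_lim)
  moreover have "(\<lambda>n. r * Sq c g x n) = Sq c (r *\<^sub>R g) x"
    by (auto simp: Sq_def c.scaleR_right)
  ultimately have "Sq c (r *\<^sub>R g) x \<longlonglongrightarrow> r * Slim c g x" by simp
  from LIMSEQ_unique[OF Slim_lim this] show ?thesis .
qed

lemma Slim_bound: "\<bar>Slim c g x\<bar> \<le> norm g * K"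
proof -
  have "\<bar>Sq c g x n\<bar> \<le> norm g * K" for n
  proof -
    have "\<bar>Sq c g x n\<bar> \<le> norm (bumpf x 1 (1 / real (Suc n))) * norm g * K"
      unfolding Sq_def by (rule pt_bound)
    also have "\<dots> \<le> 1 * norm g * K" using norm_cut Kpos by (intro mult_right_mono) auto
    finally show ?thesis by simp
  qed
  moreover have "(\<lambda>n. \<bar>Sq c g x n\<bar>) \<longlonglongrightarrow> \<bar>Slim c g x\<bar>" by (intro tendsto_intros Slim_lim)
  ultimately show ?thesis by (intro tendsto_upperbound[where F=sequentially]) auto
qed


lemma L3: "isCont (Slim c g) x0"
  unfolding continuous_at_eps_delta
proof (intro allI impI)
  fix e :: real assume e: "e > 0"
  define \<epsilon> where "\<epsilon> = e / (12 * K + 2)"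
  have ep: "\<epsilon> > 0" using e Kpos by (simp add: \<epsilon>_def)
  obtain d0 where d0: "d0 > 0" "\<And>y. dist y x0 < d0 \<Longrightarrow> \<bar>apply_bcontfun g y - apply_bcontfun g x0\<bar> < \<epsilon>"
    using bc_cont_eps[OF ep, of x0 g] by blast
  define r where "r = d0 / 5"
  have r: "r > 0" using d0 by (simp add: r_def)
  define psi0 where "psi0 = bumpf x0 1 r"
  define h where "h = (\<lambda>x. apply_bcontfun (c psi0 g) x / apply_bcontfun psi0 x)"
  have A: "\<bar>Slim c g x - h x\<bar> \<le> (1 + 2) * (2 * \<epsilon>) * K" if x: "dist x x0 < r / 2" for x
  proof -
    define b where "b = apply_bcontfun psi0 x"
    have b: "b = 1 - dist x x0 / r" using x r by (simp add: b_def psi0_def field_simps)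
    have b2: "b \<ge> 1/2" using x r unfolding b by (simp add: field_simps)
    define psi where "psi = (1 / b) *\<^sub>R psi0"
    have "\<bar>Slim c g x - apply_bcontfun (c psi g) x\<bar> \<le> (1 + 2) * (2 * \<epsilon>) * K"
    proof (rule L2)
      show "apply_bcontfun psi x = 1" using b2 by (simp add: psi_def b_def[symmetric])
      show "\<bar>apply_bcontfun psi y\<bar> \<le> 2" for y
      proof -
        have "\<bar>apply_bcontfun psi0 y\<bar> \<le> 1" unfolding psi0_def by (rule bumpf_abs)
        then have "\<bar>apply_bcontfun psi0 y\<bar> / b \<le> 1 / (1/2)" using b2
          by (intro frac_le) auto
        then show ?thesis using b2 by (simp add: psi_def abs_mult)
      qed
      show "apply_bcontfun psi y = 0" if "dist y x \<ge> 2 * r" for y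
      proof -
        have "dist y x0 \<ge> r" using that x dist_triangle[of y x x0] dist_commute[of x0 x] r by linarith
        then have "apply_bcontfun psi0 y = 0" unfolding psi0_def using bumpf_far1[OF r order_refl] by blast
        then show ?thesis unfolding psi_def by simp
      qed
      show "2 * r > 0" using r by simp
      show "\<bar>apply_bcontfun g y - apply_bcontfun g x\<bar> \<le> 2 * \<epsilon>" if "dist y x < 2 * (2 * r)" for y
      proof -
        have "dist y x0 < d0" using that x dist_triangle[of y x0 x] r
          by (simp add: r_def dist_commute)
        moreover have "dist x x0 < d0" using x r by (simp add: r_def)
        ultimately show ?thesis using d0(2)[of y] d0(2)[of x] by linarith
      qed
    qed
    moreover have "apply_bcontfun (c psi g) x = h x"
      by (simp add: psi_def h_def c.scaleR_left b_def)
    ultimately show ?thesis by simp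
  qed
  have "isCont h x0"
  proof -
    have p1: "apply_bcontfun psi0 x0 = 1" by (simp add: psi0_def)
    have "((\<lambda>x. apply_bcontfun (c psi0 g) x / apply_bcontfun psi0 x) \<longlongrightarrow>
          apply_bcontfun (c psi0 g) x0 / apply_bcontfun psi0 x0) (at x0)"
      using isCont_bc[where f="c psi0 g" and x=x0] isCont_bc[where f=psi0 and x=x0]
      using p1 by (intro tendsto_divide) (auto simp: continuous_at)
    then show ?thesis unfolding h_def continuous_at .
  qed
  then obtain d1 where d1: "d1 > 0" "\<And>x. dist x x0 < d1 \<Longrightarrow> \<bar>h x - h x0\<bar> < \<epsilon>"
    unfolding continuous_at_eps_delta dist_real_def using ep by blast
  show "\<exists>d>0. \<forall>x. dist x x0 < d \<longrightarrow> dist (Slim c g x) (Slim c g x0) < e"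
  proof (intro exI conjI allI impI)
    show "min d1 (r/2) > 0" using d1 r by simp
    fix x assume x: "dist x x0 < min d1 (r/2)"
    have 1: "\<bar>Slim c g x - h x\<bar> \<le> 6 * \<epsilon> * K" using A[of x] x by simp
    have 2: "\<bar>Slim c g x0 - h x0\<bar> \<le> 6 * \<epsilon> * K" using A[of x0] r by simp
    have 3: "\<bar>h x - h x0\<bar> < \<epsilon>" using d1(2)[of x] x by simp
    have "\<bar>Slim c g x - Slim c g x0\<bar> < 12 * \<epsilon> * K + \<epsilon>" using 1 2 3 by linarith
    also have "\<dots> = \<epsilon> * (12 * K + 1)" by (simp add: algebra_simps)
    also have "\<dots> < e" using e Kpos unfolding \<epsilon>_def by (simp add: field_simps)
    finally show "dist (Slim c g x) (Slim c g x0) < e" by (simp add: dist_real_def)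
  qed
qed

lemma L4: "apply_bcontfun (c f g) x = apply_bcontfun f x * Slim c g x - Slim c (bc_mult f g) x + Slim c f x * apply_bcontfun g x"
proof (rule eq_by_eps)
  fix e :: real assume e: "e > 0"
  define E where "E = (\<lambda>n. apply_bcontfun f x * Sq c g x n - Sq c (bc_mult f g) x n + Sq c f x n * apply_bcontfun g x)"
  have EL: "E \<longlonglongrightarrow> apply_bcontfun f x * Slim c g x - Slim c (bc_mult f g) x + Slim c f x * apply_bcontfun g x"
    unfolding E_def by (intro tendsto_intros Slim_lim)
  define \<epsilon> where "\<epsilon> = e / (norm g * K + 1)"
  have ng: "norm g * K \<ge> 0" using Kpos by simp
  have ep: "\<epsilon> > 0" using e ng by (simp add: \<epsilon>_def)
  obtain d where d: "d > 0" "\<And>y. dist y x < d \<Longrightarrow> \<bar>apply_bcontfun f y - apply_bcontfun f x\<bar> < \<epsilon>"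
    using bc_cont_eps[OF ep, of x f] by blast
  obtain N where N: "\<And>n. n \<ge> N \<Longrightarrow> 1 / real (Suc n) < d" using small_inv[OF d(1)] by auto
  have ev: "\<forall>\<^sub>F n in sequentially. \<bar>apply_bcontfun (c f g) x - E n\<bar> \<le> e"
    unfolding eventually_sequentially
  proof (intro exI allI impI)
    fix n assume n: "n \<ge> N"
    define t where "t = 1 / real (Suc n)"
    have t: "t > 0" "t < d" using N[OF n] by (auto simp: t_def)
    define phi where "phi = bumpf x 1 t"
    have phix: "apply_bcontfun phi x = 1" by (simp add: phi_def)
    define u where "u = bc_mult phi f - apply_bcontfun f x *\<^sub>R phi"
    have cc: "apply_bcontfun phi x * apply_bcontfun (c f g) x - apply_bcontfun (c (bc_mult phi f) g) x
        + apply_bcontfun (c phi (bc_mult f g)) x - apply_bcontfun (c phi f) x * apply_bcontfun g x = 0"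
      by (rule coc)
    have sq: "Sq c h x n = apply_bcontfun (c phi h) x" for h by (simp add: Sq_def phi_def t_def)
    have equ: "apply_bcontfun (c f g) x - E n = apply_bcontfun (c u g) x"
      using cc phix by (simp add: E_def sq u_def c.diff_left c.scaleR_left)
    have nu: "norm u \<le> \<epsilon>"
    proof (rule norm_bound)
      fix y
      have "apply_bcontfun u y = apply_bcontfun phi y * (apply_bcontfun f y - apply_bcontfun f x)"
        by (simp add: u_def algebra_simps)
      moreover have "\<bar>apply_bcontfun phi y * (apply_bcontfun f y - apply_bcontfun f x)\<bar> \<le> \<epsilon>"
      proof (cases "dist y x < t")
        case True
        have "\<bar>apply_bcontfun phi y\<bar> \<le> 1" unfolding phi_def by (rule bumpf_abs)
        moreover have "\<bar>apply_bcontfun f y - apply_bcontfun f x\<bar> \<le> \<epsilon>" using d(2)[of y] True t by simp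
        ultimately have "\<bar>apply_bcontfun phi y\<bar> * \<bar>apply_bcontfun f y - apply_bcontfun f x\<bar> \<le> 1 * \<epsilon>"
          using ep by (intro mult_mono) auto
        then show ?thesis by (simp add: abs_mult)
      next
        case False
        then have "apply_bcontfun phi y = 0" unfolding phi_def using bumpf_far1[OF t(1) order_refl, of y x] by simp
        then show ?thesis using ep by simp
      qed
      ultimately show "norm (apply_bcontfun u y) \<le> \<epsilon>" by simp
    qed
    have "\<bar>apply_bcontfun (c u g) x\<bar> \<le> norm u * norm g * K" by (rule pt_bound)
    also have "\<dots> \<le> \<epsilon> * (norm g * K)" using nu ng by (simp add: mult.assoc mult_right_mono)
    also have "\<dots> \<le> e" using e ng unfolding \<epsilon>_def by (simp add: field_simps)
    finally show "\<bar>apply_bcontfun (c f g) x - E n\<bar> \<le> e" using equ by simp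
  qed
  have "(\<lambda>n. \<bar>apply_bcontfun (c f g) x - E n\<bar>) \<longlonglongrightarrow>
     \<bar>apply_bcontfun (c f g) x - (apply_bcontfun f x * Slim c g x - Slim c (bc_mult f g) x + Slim c f x * apply_bcontfun g x)\<bar>"
    by (intro tendsto_intros EL)
  then show "\<bar>apply_bcontfun (c f g) x - (apply_bcontfun f x * Slim c g x - Slim c (bc_mult f g) x + Slim c f x * apply_bcontfun g x)\<bar> \<le> e"
    by (rule tendsto_upperbound[OF _ ev]) simp
qed


lemma Slim_in: "Slim c g \<in> bcontfun"
proof (rule bcontfun_normI)
  show "continuous_on UNIV (Slim c g)" using L3 by (intro continuous_at_imp_continuous_on) auto
  show "norm (Slim c g x) \<le> norm g * K" for x using Slim_bound by simp
qed

lemma H2_ctx: "\<exists>S. bounded_linear S \<and> (\<forall>f g. c f g = bc_mult f (S g) - S (bc_mult f g) + bc_mult (S f) g)"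
proof (intro exI conjI allI)
  define S where "S = (\<lambda>g. Bcontfun (Slim c g))"
  have Sa: "apply_bcontfun (S g) x = Slim c g x" for g x
    by (simp add: S_def Bcontfun_inverse[OF Slim_in])
  show "bounded_linear S"
  proof (rule bounded_linear_intro[where K=K])
    show "S (f + g) = S f + S g" for f g by (rule bcontfun_eqI) (simp add: Sa Slim_add)
    show "S (r *\<^sub>R g) = r *\<^sub>R S g" for r g by (rule bcontfun_eqI) (simp add: Sa Slim_scale)
    show "norm (S g) \<le> norm g * K" for g by (rule norm_bound) (simp add: Sa Slim_bound)
  qed
  show "c f g = bc_mult f (S g) - S (bc_mult f g) + bc_mult (S f) g" for f g
    by (rule bcontfun_eqI) (simp add: Sa L4)
qed

end

lemma H2:
  fixes c :: "('a::metric_space \<Rightarrow>\<^sub>C real) \<Rightarrow> ('a \<Rightarrow>\<^sub>C real) \<Rightarrow> ('a \<Rightarrow>\<^sub>C real)"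
  assumes bb: "bounded_bilinear c"
    and coc: "\<And>f g h x. apply_bcontfun f x * apply_bcontfun (c g h) x - apply_bcontfun (c (bc_mult f g) h) x
        + apply_bcontfun (c f (bc_mult g h)) x - apply_bcontfun (c f g) x * apply_bcontfun h x = 0"
  shows "\<exists>S. bounded_linear S \<and> (\<forall>f g. c f g = bc_mult f (S g) - S (bc_mult f g) + bc_mult (S f) g)"
proof -
  obtain K where K: "K > 0" "\<And>f g. norm (c f g) \<le> norm f * norm g * K"
    using bounded_bilinear.pos_bounded[OF bb] by blast
  show ?thesis by (rule H2_ctx[OF bb K(1) K(2) coc])
qed



lemma fstar_cong: "(\<And>j. j \<le> m \<Longrightarrow> X j = X' j) \<Longrightarrow> (\<And>j. j \<le> m \<Longrightarrow> Y j = Y' j) \<Longrightarrow> fstar c X Y m = fstar c X' Y' m"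
  unfolding fstar_def by (intro sum.cong refl) auto

lemma fstar_add1: "(\<And>i. bounded_bilinear (c i)) \<Longrightarrow> fstar c (\<lambda>j. X j + Y j) Z m = fstar c X Z m + fstar c Y Z m"
  unfolding fstar_def by (simp add: bounded_bilinear.add_left sum.distrib)

lemma fstar_add2: "(\<And>i. bounded_bilinear (c i)) \<Longrightarrow> fstar c Z (\<lambda>j. X j + Y j) m = fstar c Z X m + fstar c Z Y m"
  unfolding fstar_def by (simp add: bounded_bilinear.add_right sum.distrib)

definition ee :: "nat \<Rightarrow> 'b::zero \<Rightarrow> nat \<Rightarrow> 'b" where "ee n u = (\<lambda>j. if j = n then u else 0)"

lemma fstar_e1: "(\<And>i. bounded_bilinear (c i)) \<Longrightarrow> fstar c (ee n u) Z n = c 0 u (Z 0)"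
proof -
  assume bb: "\<And>i. bounded_bilinear (c i)"
  have "fstar c (ee n u) Z n = (\<Sum>i\<le>n. \<Sum>j\<le>n - i. if j = n then c i u (Z (n - i - j)) else 0)"
    unfolding fstar_def ee_def by (intro sum.cong refl) (simp add: bounded_bilinear.zero_left[OF bb])
  also have "\<dots> = (\<Sum>i\<le>n. if i = 0 then c i u (Z (n - i - n)) else 0)"
    by (intro sum.cong refl) (auto simp: sum.delta)
  also have "\<dots> = c 0 u (Z 0)" by (simp add: sum.delta)
  finally show ?thesis .
qed

lemma fstar_e2: "(\<And>i. bounded_bilinear (c i)) \<Longrightarrow> fstar c Z (ee n u) n = c 0 (Z 0) u"
proof -
  assume bb: "\<And>i. bounded_bilinear (c i)"
  have "fstar c Z (ee n u) n = (\<Sum>i\<le>n. \<Sum>j\<le>n - i. if j = 0 \<and> i = 0 then c i (Z j) u else 0)"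
    unfolding fstar_def ee_def by (intro sum.cong refl) (auto simp: bounded_bilinear.zero_right[OF bb])
  also have "\<dots> = (\<Sum>i\<le>n. if i = 0 then c i (Z 0) u else 0)"
    by (intro sum.cong refl) (auto simp: sum.delta)
  also have "\<dots> = c 0 (Z 0) u" by (simp add: sum.delta)
  finally show ?thesis .
qed

lemma fstar_e1_lt: "(\<And>i. bounded_bilinear (c i)) \<Longrightarrow> m < n \<Longrightarrow> fstar c (ee n u) Z m = 0"
  unfolding fstar_def ee_def by (auto intro!: sum.neutral simp: bounded_bilinear.zero_left)


lemma step:
  fixes c :: "nat \<Rightarrow> ('a::metric_space \<Rightarrow>\<^sub>C real) \<Rightarrow> ('a \<Rightarrow>\<^sub>C real) \<Rightarrow> ('a \<Rightarrow>\<^sub>C real)"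
    and Ts :: "nat \<Rightarrow> ('a \<Rightarrow>\<^sub>C real) \<Rightarrow> ('a \<Rightarrow>\<^sub>C real)"
  assumes bb: "\<And>i. bounded_bilinear (c i)"
    and c0: "\<And>f g. c 0 f g = bc_mult f g"
    and assoc: "\<And>F G H. fstar c (fstar c F G) H = fstar c F (fstar c G H)"
    and n: "n \<ge> 1"
    and T0: "Ts 0 = id"
    and Tbl: "\<And>j. 1 \<le> j \<Longrightarrow> j < n \<Longrightarrow> bounded_linear (Ts j)"
    and Teq: "\<And>m f g. m < n \<Longrightarrow> fstar c (\<lambda>j. Ts j f) (\<lambda>j. Ts j g) m = Ts m (bc_mult f g)"
  shows "\<exists>S. bounded_linear S \<and> (\<forall>f g. fstar c (\<lambda>j. (Ts(n := S)) j f) (\<lambda>j. (Ts(n := S)) j g) n = S (bc_mult f g))"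
proof -
  define T' where "T' = Ts(n := (\<lambda>_. 0))"
  define R where "R = (\<lambda>f g. fstar c (\<lambda>j. T' j f) (\<lambda>j. T' j g) n)"
  have T'0: "T' 0 = id" using n T0 by (simp add: T'_def)
  have T'n: "T' n = (\<lambda>_. 0)" by (simp add: T'_def)
  have T'bl: "bounded_linear (T' j)" if jn: "j \<le> n" for j
  proof -
    consider "j = 0" | "j = n" | "1 \<le> j \<and> j < n" using jn by (cases "j = 0"; cases "j = n"; auto)
    then show ?thesis
    proof cases
      case 1 then show ?thesis using T'0 by (simp add: id_def bounded_linear_ident)
    next
      case 2 then show ?thesis using T'n by (simp add: bounded_linear_zero)
    next
      case 3 then show ?thesis using Tbl[of j] by (simp add: T'_def)
    qed
  qed
  have Rbb: "bounded_bilinear R"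
    unfolding R_def fstar_def
    by (intro bb_sum bounded_bilinear.comp[OF bb] T'bl) auto
  have T'eq: "fstar c (\<lambda>j. T' j f) (\<lambda>j. T' j g) m = T' m (bc_mult f g)" if "m < n" for m f g
  proof -
    have "fstar c (\<lambda>j. T' j f) (\<lambda>j. T' j g) m = fstar c (\<lambda>j. Ts j f) (\<lambda>j. Ts j g) m"
      using that by (intro fstar_cong) (auto simp: T'_def)
    also have "\<dots> = Ts m (bc_mult f g)" using Teq[OF that] .
    finally show ?thesis using that by (simp add: T'_def)
  qed
  have approx: "fstar c (fstar c (\<lambda>j. T' j f) (\<lambda>j. T' j g)) Z n
      = R (bc_mult f g) h + bc_mult (R f g) h" if Z: "Z = (\<lambda>j. T' j h)" for f g h Z
  proof -
    have "fstar c (fstar c (\<lambda>j. T' j f) (\<lambda>j. T' j g)) Z n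
        = fstar c (\<lambda>j. T' j (bc_mult f g) + ee n (R f g) j) Z n"
    proof (rule fstar_cong)
      fix j assume j: "j \<le> n"
      show "fstar c (\<lambda>j. T' j f) (\<lambda>j. T' j g) j = T' j (bc_mult f g) + ee n (R f g) j"
      proof (cases "j = n")
        case True then show ?thesis by (simp add: R_def T'n ee_def)
      next
        case False then show ?thesis using j T'eq[of j f g] by (simp add: ee_def)
      qed
    qed simp
    also have "\<dots> = R (bc_mult f g) h + c 0 (R f g) (Z 0)"
      by (simp add: fstar_add1[OF bb] fstar_e1[OF bb] R_def Z)
    also have "\<dots> = R (bc_mult f g) h + bc_mult (R f g) h" using T'0 by (simp add: c0 Z)
    finally show ?thesis .
  qed
  have approx2: "fstar c Z (fstar c (\<lambda>j. T' j g) (\<lambda>j. T' j h)) n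
      = R f (bc_mult g h) + bc_mult f (R g h)" if Z: "Z = (\<lambda>j. T' j f)" for f g h Z
  proof -
    have "fstar c Z (fstar c (\<lambda>j. T' j g) (\<lambda>j. T' j h)) n
        = fstar c Z (\<lambda>j. T' j (bc_mult g h) + ee n (R g h) j) n"
    proof (rule fstar_cong)
      fix j assume j: "j \<le> n"
      show "fstar c (\<lambda>j. T' j g) (\<lambda>j. T' j h) j = T' j (bc_mult g h) + ee n (R g h) j"
      proof (cases "j = n")
        case True then show ?thesis by (simp add: R_def T'n ee_def)
      next
        case False then show ?thesis using j T'eq[of j g h] by (simp add: ee_def)
      qed
    qed simp
    also have "\<dots> = R f (bc_mult g h) + c 0 (Z 0) (R g h)"
      by (simp add: fstar_add2[OF bb] fstar_e2[OF bb] R_def Z)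
    also have "\<dots> = R f (bc_mult g h) + bc_mult f (R g h)" using T'0 by (simp add: c0 Z)
    finally show ?thesis .
  qed
  have cocR: "R (bc_mult f g) h + bc_mult (R f g) h = R f (bc_mult g h) + bc_mult f (R g h)" for f g h
  proof -
    have "fstar c (fstar c (\<lambda>j. T' j f) (\<lambda>j. T' j g)) (\<lambda>j. T' j h) n
        = fstar c (\<lambda>j. T' j f) (fstar c (\<lambda>j. T' j g) (\<lambda>j. T' j h)) n" by (simp add: assoc)
    then show ?thesis using approx[OF refl, of f g h] approx2[OF refl, of f g h] by simp
  qed
  have cocRx: "apply_bcontfun f x * apply_bcontfun (R g h) x - apply_bcontfun (R (bc_mult f g) h) x
        + apply_bcontfun (R f (bc_mult g h)) x - apply_bcontfun (R f g) x * apply_bcontfun h x = 0" for f g h x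
  proof -
    have "apply_bcontfun (R (bc_mult f g) h + bc_mult (R f g) h) x = apply_bcontfun (R f (bc_mult g h) + bc_mult f (R g h)) x"
      using cocR by simp
    then show ?thesis by simp
  qed
  obtain S0 where S0: "bounded_linear S0" "\<And>f g. R f g = bc_mult f (S0 g) - S0 (bc_mult f g) + bc_mult (S0 f) g"
    using H2[OF Rbb cocRx] by blast
  define S where "S = (\<lambda>g. - S0 g)"
  have Sbl: "bounded_linear S" unfolding S_def using S0(1) by (rule bounded_linear_minus)
  show ?thesis
  proof (intro exI conjI allI)
    show "bounded_linear S" by (rule Sbl)
    fix f g
    have F: "(\<lambda>j. (Ts(n := S)) j u) = (\<lambda>j. T' j u + ee n (S u) j)" for u
      by (auto simp: T'_def ee_def)
    have e0: "ee n (S g) 0 = 0" using n by (simp add: ee_def)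
    have e0f: "ee n (S f) 0 = 0" using n by (simp add: ee_def)
    have "fstar c (\<lambda>j. (Ts(n := S)) j f) (\<lambda>j. (Ts(n := S)) j g) n
        = R f g + bc_mult f (S g) + bc_mult (S f) g"
      unfolding F using T'0 e0 e0f
      by (simp add: fstar_add1[OF bb] fstar_add2[OF bb] fstar_e1[OF bb] fstar_e2[OF bb] R_def c0
           bounded_bilinear.zero_right[OF bb_bc_mult] bounded_bilinear.zero_left[OF bb_bc_mult] add_ac)
    also have "\<dots> = S (bc_mult f g)"
      by (rule bcontfun_eqI) (simp add: S0(2) S_def algebra_simps)
    finally show "fstar c (\<lambda>j. (Ts(n := S)) j f) (\<lambda>j. (Ts(n := S)) j g) n = S (bc_mult f g)" .
  qed
qed



primrec seqT :: "(nat \<Rightarrow> ('a::metric_space \<Rightarrow>\<^sub>C real) \<Rightarrow> ('a \<Rightarrow>\<^sub>C real) \<Rightarrow> ('a \<Rightarrow>\<^sub>C real))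
    \<Rightarrow> nat \<Rightarrow> nat \<Rightarrow> ('a \<Rightarrow>\<^sub>C real) \<Rightarrow> ('a \<Rightarrow>\<^sub>C real)" where
  "seqT c 0 = (\<lambda>j. id)"
| "seqT c (Suc n) = (seqT c n)(Suc n := (SOME S. bounded_linear S \<and>
     (\<forall>f g. fstar c (\<lambda>j. ((seqT c n)(Suc n := S)) j f) (\<lambda>j. ((seqT c n)(Suc n := S)) j g) (Suc n) = S (bc_mult f g))))"

lemma seqT_stable: "j \<le> n \<Longrightarrow> seqT c (n + k) j = seqT c n j"
  by (induction k) auto

theorem mainTheorem16:
  fixes c :: "nat \<Rightarrow> ('a::metric_space \<Rightarrow>\<^sub>C real) \<Rightarrow> ('a \<Rightarrow>\<^sub>C real) \<Rightarrow> ('a \<Rightarrow>\<^sub>C real)"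
  assumes compact_M: "compact (UNIV :: 'a set)"
    and c0: "\<And>f g. c 0 f g = bc_mult f g"
    and c_cont: "\<And>k. k \<ge> 1 \<Longrightarrow>
        \<exists>L :: (('a \<times> 'a) \<Rightarrow>\<^sub>C real) \<Rightarrow> ('a \<Rightarrow>\<^sub>C real).
          bounded_linear L \<and> (\<forall>f g. c k f g = L (bc_tensor f g))"
    and assoc: "\<And>F G H. fstar c (fstar c F G) H = fstar c F (fstar c G H)"
  shows "\<exists>T :: nat \<Rightarrow> ('a \<Rightarrow>\<^sub>C real) \<Rightarrow> ('a \<Rightarrow>\<^sub>C real).
           T 0 = id \<and> (\<forall>k\<ge>1. bounded_linear (T k)) \<and>
           (\<forall>f g. fstar c (\<lambda>n. T n f) (\<lambda>n. T n g) = (\<lambda>n. T n (bc_mult f g)))"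
proof -
  have bb: "bounded_bilinear (c i)" for i
  proof (cases "i = 0")
    case True
    have "c 0 = bc_mult" using c0 by (intro ext) auto
    then show ?thesis using True bb_bc_mult by simp
  next
    case False
    then obtain L where L: "bounded_linear L" "\<And>f g. c i f g = L (bc_tensor f g)"
      using c_cont[of i] by auto
    have "c i = (\<lambda>f g. L (bc_tensor f g))" using L(2) by (intro ext) auto
    then show ?thesis using bb_compose[OF L(1) bb_bc_tensor] by simp
  qed
  define Inv where "Inv = (\<lambda>n. seqT c n 0 = id \<and> (\<forall>j. 1 \<le> j \<and> j \<le> n \<longrightarrow> bounded_linear (seqT c n j)) \<and>
      (\<forall>m\<le>n. \<forall>f g. fstar c (\<lambda>j. seqT c n j f) (\<lambda>j. seqT c n j g) m = seqT c n m (bc_mult f g)))"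
  have inv: "Inv n" for n
  proof (induction n)
    case 0
    show ?case unfolding Inv_def by (auto simp: fstar_def c0)
  next
    case (Suc n)
    let ?Ts = "seqT c n"
    let ?P = "\<lambda>S. bounded_linear S \<and>
     (\<forall>f g. fstar c (\<lambda>j. (?Ts(Suc n := S)) j f) (\<lambda>j. (?Ts(Suc n := S)) j g) (Suc n) = S (bc_mult f g))"
    have ex: "\<exists>S. ?P S"
    proof (rule step[OF bb c0 assoc])
      show "1 \<le> Suc n" by simp
      show "?Ts 0 = id" using Suc.IH by (simp add: Inv_def)
      show "bounded_linear (?Ts j)" if "1 \<le> j" "j < Suc n" for j using Suc.IH that by (simp add: Inv_def)
      show "fstar c (\<lambda>j. ?Ts j f) (\<lambda>j. ?Ts j g) m = ?Ts m (bc_mult f g)" if "m < Suc n" for m f g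
        using Suc.IH that by (simp add: Inv_def)
    qed
    define S where "S = (SOME S. ?P S)"
    have PS: "?P S" unfolding S_def using someI_ex[OF ex] .
    have sT: "seqT c (Suc n) = ?Ts(Suc n := S)" by (simp add: S_def)
    show ?case unfolding Inv_def sT
    proof (intro conjI allI impI)
      show "(?Ts(Suc n := S)) 0 = id" using Suc.IH by (simp add: Inv_def)
      fix j assume j: "1 \<le> j \<and> j \<le> Suc n"
      show "bounded_linear ((?Ts(Suc n := S)) j)"
        using Suc.IH j PS by (cases "j = Suc n") (auto simp: Inv_def)
    next
      fix m f g assume m: "m \<le> Suc n"
      show "fstar c (\<lambda>j. (?Ts(Suc n := S)) j f) (\<lambda>j. (?Ts(Suc n := S)) j g) m = (?Ts(Suc n := S)) m (bc_mult f g)"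
      proof (cases "m = Suc n")
        case True then show ?thesis using PS by simp
      next
        case False
        then have mn: "m \<le> n" using m by simp
        have "fstar c (\<lambda>j. (?Ts(Suc n := S)) j f) (\<lambda>j. (?Ts(Suc n := S)) j g) m = fstar c (\<lambda>j. ?Ts j f) (\<lambda>j. ?Ts j g) m"
          using mn by (intro fstar_cong) auto
        also have "\<dots> = ?Ts m (bc_mult f g)" using Suc.IH mn by (simp add: Inv_def)
        finally show ?thesis using False by simp
      qed
    qed
  qed
  define T where "T = (\<lambda>j. seqT c j j)"
  have Tn: "T j = seqT c n j" if "j \<le> n" for j n
    using seqT_stable[where j=j and n=j and c=c and k="n - j"] that by (simp add: T_def)
  show ?thesis
  proof (intro exI conjI allI impI)
    show "T 0 = id" using inv[of 0] by (simp add: T_def Inv_def)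
    show "bounded_linear (T k)" if "k \<ge> 1" for k using inv[of k] that by (simp add: T_def Inv_def)
    fix f g
    show "fstar c (\<lambda>n. T n f) (\<lambda>n. T n g) = (\<lambda>n. T n (bc_mult f g))"
    proof
      fix n
      have "fstar c (\<lambda>n. T n f) (\<lambda>n. T n g) n = fstar c (\<lambda>j. seqT c n j f) (\<lambda>j. seqT c n j g) n"
        by (intro fstar_cong) (simp_all add: Tn)
      also have "\<dots> = seqT c n n (bc_mult f g)" using inv[of n] by (simp add: Inv_def)
      finally show "fstar c (\<lambda>n. T n f) (\<lambda>n. T n g) n = T n (bc_mult f g)" by (simp add: T_def)
    qed
  qed
qed


end
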